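(* For every hypothesis class $\mathcal{H}\subseteq\{0,1\}^{\mathcal{X}}$, $\mathtt{CD}(\mathcal{H})\le\max\{2\,\mathtt{LD}(\mathcal{H})\log_2(\mathtt{LD}(\mathcal{H})),\,300\}$ (with the convention $0\log_2 0=0$).
   Context: A dataset of size $m$ is $S=((x_1,y_1),\dots,(x_m,y_m))\in(\mathcal{X}\times\{0,1\})^m$; it is $\mathcal{H}$-realizable if some $h\in\mathcal{H}$ satisfies $h(x_i)=y_i$ for all $i$. $G_m(\mathcal{H})$ is the graph on realizable datasets of size $m$ with $S,S'$ adjacent iff there is $x$ with $(x,0)$ appearing in $S$ and $(x,1)$ appearing in $S'$; $\omega_m$ is its clique number; $\mathtt{CD}(\mathcal{H})=\sup\{m:\omega_m=2^m\}$. A mistake tree is a complete binary tree whose internal nodes are labeled by points of $\mathcal{X}$, each internal node having one outgoing edge labeled $0$ and one labeled $1$; a root-to-leaf path yields the sequence of (node label, edge label) pairs. $\mathcal{H}$ shatters the tree if every root-to-leaf path is realizable by $\mathcal{H}$. $\mathtt{LD}(\mathcal{H})$ is the largest depth of a complete mistake tree shattered by $\mathcal{H}$ ($\infty$ if unbounded). *)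

theory Defs
  imports Complex_Main "HOL-Library.Extended_Real"
begin

text \<open>Hypothesis classes are sets of functions 'x => bool (False = label 0, True = label 1).
A dataset of size m is a list of length m of labelled points.\<close>

definition realizable :: "('x \<Rightarrow> bool) set \<Rightarrow> ('x \<times> bool) list \<Rightarrow> bool" where
  "realizable H S \<longleftrightarrow> (\<exists>h\<in>H. \<forall>(x, y)\<in>set S. h x = y)"

definition datasets :: "('x \<Rightarrow> bool) set \<Rightarrow> nat \<Rightarrow> ('x \<times> bool) list set" where
  "datasets H m = {S. length S = m \<and> realizable H S}"

definition adjacent :: "('x \<times> bool) list \<Rightarrow> ('x \<times> bool) list \<Rightarrow> bool" where
  "adjacent S S' \<longleftrightarrow> (\<exists>x. ((x, False) \<in> set S \<and> (x, True) \<in> set S') \<or>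
                          ((x, False) \<in> set S' \<and> (x, True) \<in> set S))"

definition is_clique :: "('x \<Rightarrow> bool) set \<Rightarrow> nat \<Rightarrow> ('x \<times> bool) list set \<Rightarrow> bool" where
  "is_clique H m C \<longleftrightarrow> C \<subseteq> datasets H m \<and> (\<forall>S\<in>C. \<forall>S'\<in>C. S \<noteq> S' \<longrightarrow> adjacent S S')"

definition clique_number :: "('x \<Rightarrow> bool) set \<Rightarrow> nat \<Rightarrow> enat" where
  "clique_number H m = Sup {enat (card C) | C. finite C \<and> is_clique H m C}"

definition CD :: "('x \<Rightarrow> bool) set \<Rightarrow> enat" where
  "CD H = Sup {enat m | m. clique_number H m = enat (2 ^ m)}"

text \<open>Mistake trees: Node x T0 T1, T0 along the edge labelled 0, T1 along the edge labelled 1.\<close>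
datatype 'x mtree = Leaf | Node 'x "'x mtree" "'x mtree"

fun complete_depth :: "'x mtree \<Rightarrow> nat \<Rightarrow> bool" where
  "complete_depth Leaf d = (d = 0)"
| "complete_depth (Node x l r) d = (d > 0 \<and> complete_depth l (d - 1) \<and> complete_depth r (d - 1))"

fun paths :: "'x mtree \<Rightarrow> ('x \<times> bool) list set" where
  "paths Leaf = {[]}"
| "paths (Node x l r) = ((\<lambda>p. (x, False) # p) ` paths l) \<union> ((\<lambda>p. (x, True) # p) ` paths r)"

definition shatters_tree :: "('x \<Rightarrow> bool) set \<Rightarrow> 'x mtree \<Rightarrow> bool" where
  "shatters_tree H T \<longleftrightarrow> (\<forall>p\<in>paths T. realizable H p)"

definition LD :: "('x \<Rightarrow> bool) set \<Rightarrow> enat" where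
  "LD H = Sup {enat d | d. \<exists>T. complete_depth T d \<and> shatters_tree H T}"

end

theory Submission
  imports Defs
begin

definition sh :: "('x \<Rightarrow> bool) set \<Rightarrow> ('x \<times> bool) list \<Rightarrow> nat \<Rightarrow> bool" where
  "sh H p k \<longleftrightarrow> (\<exists>T. complete_depth T k \<and> (\<forall>q\<in>paths T. realizable H (p @ q)))"

lemma sh_node:
  assumes "sh H (p @ [(x, False)]) k" "sh H (p @ [(x, True)]) k"
  shows "sh H p (Suc k)"
proof -
  obtain Tl where l: "complete_depth Tl k" "\<forall>q\<in>paths Tl. realizable H (p @ [(x, False)] @ q)"
    using assms(1) unfolding sh_def by auto
  obtain Tr where r: "complete_depth Tr k" "\<forall>q\<in>paths Tr. realizable H (p @ [(x, True)] @ q)"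
    using assms(2) unfolding sh_def by auto
  have "complete_depth (Node x Tl Tr) (Suc k)" using l r by simp
  moreover have "\<forall>q\<in>paths (Node x Tl Tr). realizable H (p @ q)" using l r by auto
  ultimately show ?thesis unfolding sh_def by blast
qed

lemma sh0: "sh H p 0 \<longleftrightarrow> realizable H p"
proof
  assume "sh H p 0"
  then obtain T where "complete_depth T 0" "\<forall>q\<in>paths T. realizable H (p @ q)"
    unfolding sh_def by auto
  moreover have "T = Leaf" using \<open>complete_depth T 0\<close> by (cases T) auto
  ultimately show "realizable H p" by auto
next
  assume "realizable H p"
  then show "sh H p 0" unfolding sh_def by (intro exI[of _ Leaf]) auto
qed

lemma sh_LD: assumes "LD H = enat d" shows "\<not> sh H [] (Suc d)"
proof
  assume "sh H [] (Suc d)"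
  then obtain T where "complete_depth T (Suc d)" "shatters_tree H T"
    unfolding sh_def shatters_tree_def by auto
  then have "enat (Suc d) \<in> {enat d | d. \<exists>T. complete_depth T d \<and> shatters_tree H T}" by blast
  then have "enat (Suc d) \<le> LD H" unfolding LD_def by (rule Sup_upper)
  then show False using assms by simp
qed

lemma realizable_sub: "realizable H S \<Longrightarrow> set p \<subseteq> set S \<Longrightarrow> realizable H p"
  unfolding realizable_def by blast

fun bnd :: "nat \<Rightarrow> nat \<Rightarrow> nat" where
  "bnd m 0 = 0"
| "bnd m (Suc r) = Suc (m * bnd m r)"

lemma bnd_le: "bnd m (Suc d) \<le> (m + 1) ^ d"
proof (induction d)
  case 0 then show ?case by simp
next
  case (Suc d)
  have "bnd m (Suc (Suc d)) = 1 + m * bnd m (Suc d)" by simp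
  also have "\<dots> \<le> 1 + m * (m+1)^d" using mult_le_mono2[OF Suc.IH, of m] by simp
  also have "\<dots> \<le> (m+1)^d + m * (m+1)^d" by simp
  also have "\<dots> = (m+1)^Suc d" by simp
  finally show ?case .
qed

lemma rank:
  assumes fin: "finite C"
    and len: "\<forall>S\<in>C. length S = m \<and> realizable H S"
    and adj: "\<forall>S\<in>C. \<forall>S'\<in>C. S \<noteq> S' \<longrightarrow> adjacent S S'"
    and cov: "\<forall>f. \<exists>S\<in>C. \<forall>(x, y)\<in>set S. f x = y"
  shows "\<not> sh H p r \<Longrightarrow> card {S\<in>C. set p \<subseteq> set S} \<le> bnd m r"
proof (induction r arbitrary: p)
  case 0
  have e: "{S\<in>C. set p \<subseteq> set S} = {}"
    using 0 len realizable_sub sh0 by blast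
  show ?case by (subst e) simp
next
  case (Suc r)
  define g where "g x = sh H (p @ [(x, True)]) r" for x
  have ng: "\<not> sh H (p @ [(x, \<not> g x)]) r" for x
  proof (cases "g x")
    case True
    then show ?thesis using Suc.prems sh_node[of H p x r] unfolding g_def by auto
  next
    case False
    then show ?thesis unfolding g_def by simp
  qed
  obtain \<gamma> where g1: "\<gamma> \<in> C" and g2: "\<forall>(x, y)\<in>set \<gamma>. g x = y" using cov by blast
  define F where "F x = {S\<in>C. set (p @ [(x, \<not> g x)]) \<subseteq> set S}" for x
  have sub: "{S\<in>C. set p \<subseteq> set S} \<subseteq> insert \<gamma> (\<Union>x\<in>fst ` set \<gamma>. F x)"
  proof
    fix S assume S: "S \<in> {S\<in>C. set p \<subseteq> set S}"
    show "S \<in> insert \<gamma> (\<Union>x\<in>fst ` set \<gamma>. F x)"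
    proof (cases "S = \<gamma>")
      case False
      then have "adjacent S \<gamma>" using adj S g1 by auto
      then obtain x where "((x, False) \<in> set S \<and> (x, True) \<in> set \<gamma>) \<or>
                          ((x, False) \<in> set \<gamma> \<and> (x, True) \<in> set S)"
        unfolding adjacent_def by blast
      then show ?thesis
      proof
        assume a: "(x, False) \<in> set S \<and> (x, True) \<in> set \<gamma>"
        then have "g x" using g2 by auto
        then have "S \<in> F x" using a S unfolding F_def by auto
        moreover have "x \<in> fst ` set \<gamma>" using a by force
        ultimately show ?thesis by blast
      next
        assume a: "(x, False) \<in> set \<gamma> \<and> (x, True) \<in> set S"
        then have "\<not> g x" using g2 by auto
        then have "S \<in> F x" using a S unfolding F_def by auto
        moreover have "x \<in> fst ` set \<gamma>" using a by force
        ultimately show ?thesis by blast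
      qed
    qed simp
  qed
  have Fb: "card (F x) \<le> bnd m r" for x
    using Suc.IH[OF ng[of x]] unfolding F_def by simp
  have "card (fst ` set \<gamma>) \<le> m"
    using card_image_le[of "set \<gamma>" fst] card_length[of \<gamma>] len g1 by auto
  have "card {S\<in>C. set p \<subseteq> set S} \<le> card (insert \<gamma> (\<Union>x\<in>fst ` set \<gamma>. F x))"
    by (rule card_mono) (use fin sub F_def in auto)
  also have "\<dots> \<le> Suc (card (\<Union>x\<in>fst ` set \<gamma>. F x))"
    by (rule card_insert_le_m1) auto
  also have "card (\<Union>x\<in>fst ` set \<gamma>. F x) \<le> (\<Sum>x\<in>fst ` set \<gamma>. card (F x))"
    by (rule card_UN_le) simp
  also have "\<dots> \<le> card (fst ` set \<gamma>) * bnd m r"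
    using sum_bounded_above[of "fst ` set \<gamma>" "\<lambda>x. card (F x)" "bnd m r"] Fb by simp
  also have "\<dots> \<le> m * bnd m r" using \<open>card (fst ` set \<gamma>) \<le> m\<close> by simp
  finally show ?case by simp
qed

lemma covering:
  fixes H :: "('x \<Rightarrow> bool) set" and C :: "('x \<times> bool) list set"
  assumes fin: "finite C"
    and len: "\<forall>S\<in>C. length S = m \<and> realizable H S"
    and adj: "\<forall>S\<in>C. \<forall>S'\<in>C. S \<noteq> S' \<longrightarrow> adjacent S S'"
    and cardC: "card C = 2 ^ m"
  shows "\<exists>S\<in>C. \<forall>(x, y)\<in>set S. f x = y"
proof (rule ccontr)
  assume nf: "\<not> (\<exists>S\<in>C. \<forall>(x, y)\<in>set S. f x = y)"
  define U where "U = (\<Union>S\<in>C. fst ` set S)"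
  have finU: "finite U" using fin unfolding U_def by auto
  define n where "n = card U"
  define A where "A S = {Y \<in> Pow U. \<forall>(x, y)\<in>set S. (x \<in> Y) = y}" for S :: "('x \<times> bool) list"
  define T where "T S = {x. (x, True) \<in> set S}" for S :: "('x \<times> bool) list"
  have cardA: "2 ^ n \<le> 2 ^ m * card (A S)" if SC: "S \<in> C" for S
  proof -
    obtain h where h: "\<forall>(x, y)\<in>set S. h x = y" using len SC unfolding realizable_def by blast
    define D where "D = fst ` set S"
    have DU: "D \<subseteq> U" using SC unfolding U_def D_def by auto
    have TD: "T S \<subseteq> D" unfolding T_def D_def by force
    have inA: "Z \<union> T S \<in> A S" if "Z \<subseteq> U - D" for Z
    proof -
      have "Z \<union> T S \<subseteq> U" using that TD DU by blast
      moreover have "(x \<in> Z \<union> T S) = y" if xy: "(x, y) \<in> set S" for x y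
      proof -
        have "x \<in> D" using xy unfolding D_def by force
        then have "x \<notin> Z" using \<open>Z \<subseteq> U - D\<close> by blast
        moreover have "(x \<in> T S) = y"
        proof (cases y)
          case True then show ?thesis using xy unfolding T_def by simp
        next
          case False
          have "(x, True) \<notin> set S"
          proof
            assume "(x, True) \<in> set S"
            then have "h x = True" using h by auto
            moreover have "h x = False" using h xy False by auto
            ultimately show False by simp
          qed
          then show ?thesis using False unfolding T_def by simp
        qed
        ultimately show ?thesis by blast
      qed
      ultimately show ?thesis unfolding A_def by auto
    qed
    have bij: "bij_betw (\<lambda>Z. Z \<union> T S) (Pow (U - D)) (A S)"
      unfolding bij_betw_def
    proof
      show "inj_on (\<lambda>Z. Z \<union> T S) (Pow (U - D))" unfolding inj_on_def using TD by blast
      show "(\<lambda>Z. Z \<union> T S) ` Pow (U - D) = A S"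
      proof
        show "(\<lambda>Z. Z \<union> T S) ` Pow (U - D) \<subseteq> A S" using inA by blast
        show "A S \<subseteq> (\<lambda>Z. Z \<union> T S) ` Pow (U - D)"
        proof
          fix Y assume Y: "Y \<in> A S"
          have "Y = (Y - D) \<union> T S"
          proof
            show "Y \<subseteq> (Y - D) \<union> T S"
            proof
              fix x assume "x \<in> Y"
              show "x \<in> (Y - D) \<union> T S"
              proof (cases "x \<in> D")
                case True
                then obtain y where "(x, y) \<in> set S" unfolding D_def by force
                then have "y" using Y \<open>x \<in> Y\<close> unfolding A_def by auto
                then show ?thesis using \<open>(x, y) \<in> set S\<close> unfolding T_def by simp
              qed (use \<open>x \<in> Y\<close> in blast)
            qed
            show "(Y - D) \<union> T S \<subseteq> Y" using Y unfolding A_def T_def by auto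
          qed
          moreover have "Y - D \<in> Pow (U - D)" using Y unfolding A_def by auto
          ultimately show "Y \<in> (\<lambda>Z. Z \<union> T S) ` Pow (U - D)" by blast
        qed
      qed
    qed
    have finD: "finite D" unfolding D_def by simp
    have cD: "card D \<le> m"
      using card_image_le[of "set S" fst] card_length[of S] len SC unfolding D_def by auto
    have cDn: "card D \<le> n" unfolding n_def using card_mono[OF finU DU] .
    have "card (A S) = card (Pow (U - D))" using bij_betw_same_card[OF bij] by simp
    also have "\<dots> = 2 ^ card (U - D)" using finU by (simp add: card_Pow)
    also have "card (U - D) = n - card D" unfolding n_def using card_Diff_subset[OF finD DU] .
    finally have cA: "card (A S) = 2 ^ (n - card D)" .
    have "(2::nat) ^ n = 2 ^ card D * 2 ^ (n - card D)"
      using cDn by (simp add: power_add[symmetric])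
    also have "\<dots> \<le> 2 ^ m * 2 ^ (n - card D)"
      using cD by (simp add: power_increasing)
    finally show ?thesis using cA by simp
  qed
  have disj: "A S \<inter> A S' = {}" if "S \<in> C" "S' \<in> C" "S \<noteq> S'" for S S'
  proof -
    have "adjacent S S'" using adj that by blast
    then obtain x where "((x, False) \<in> set S \<and> (x, True) \<in> set S') \<or>
                          ((x, False) \<in> set S' \<and> (x, True) \<in> set S)"
      unfolding adjacent_def by blast
    then show ?thesis unfolding A_def by auto
  qed
  define Y0 where "Y0 = {x \<in> U. f x}"
  have "Y0 \<notin> A S" if "S \<in> C" for S
  proof
    assume "Y0 \<in> A S"
    then have "\<forall>(x, y)\<in>set S. f x = y"
      using that unfolding A_def Y0_def U_def by force
    then show False using nf that by blast
  qed
  then have sub: "(\<Union>S\<in>C. A S) \<subseteq> Pow U - {Y0}" unfolding A_def by blast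
  have Y0U: "Y0 \<in> Pow U" unfolding Y0_def by auto
  have "card (\<Union>S\<in>C. A S) \<le> card (Pow U - {Y0})"
    using sub finU by (intro card_mono) auto
  also have "\<dots> = 2 ^ n - 1" using Y0U finU by (simp add: card_Pow n_def)
  finally have c1: "card (\<Union>S\<in>C. A S) \<le> 2 ^ n - 1" .
  have "card (\<Union>S\<in>C. A S) = (\<Sum>S\<in>C. card (A S))"
    by (rule card_UN_disjoint) (use fin finU disj in \<open>auto simp: A_def\<close>)
  then have "2 ^ m * card (\<Union>S\<in>C. A S) = (\<Sum>S\<in>C. 2 ^ m * card (A S))"
    by (simp add: sum_distrib_left)
  also have "\<dots> \<ge> (\<Sum>S\<in>C. 2 ^ n)" using cardA by (intro sum_mono) auto
  finally have "2 ^ m * 2 ^ n \<le> 2 ^ m * card (\<Union>S\<in>C. A S)" using cardC by simp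
  then have "2 ^ n \<le> card (\<Union>S\<in>C. A S)" by simp
  moreover have "(0::nat) < 2 ^ n" by simp
  ultimately show False using c1 by linarith
qed

lemma qpow: "5 \<le> q \<Longrightarrow> (q + 1) * q < (2::nat) ^ q"
proof (induction q rule: dec_induct)
  case base then show ?case by simp
next
  case (step q)
  have "(Suc q + 1) * Suc q = (q + 1) * q + 2 * (q + 1)" by (simp add: algebra_simps)
  also have "2 * (q + 1) \<le> (q + 1) * q"
  proof -
    have "2 \<le> q" using step(1) by simp
    then have "2 * (q + 1) \<le> q * (q + 1)" by (rule mult_le_mono1)
    then show ?thesis by (simp add: mult.commute)
  qed
  finally show ?case using step(3) by simp
qed

lemma arith:
  assumes a: "(2::nat) ^ m \<le> (m + 1) ^ d"
  shows "m \<le> 300 \<or> (2 \<le> d \<and> 2 ^ m \<le> d ^ (2 * d))"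
proof (rule ccontr)
  assume na: "\<not> ?thesis"
  then have m: "m > 300" by simp
  show False
  proof (cases "m + 1 \<le> d * d")
    case True
    have "d \<ge> 2"
    proof (rule ccontr)
      assume "\<not> d \<ge> 2"
      then have "d * d \<le> 1 * 1" by (intro mult_le_mono) auto
      then show False using True m by simp
    qed
    have "(m + 1) ^ d \<le> (d * d) ^ d" using True by (rule power_mono) simp
    also have "\<dots> = d ^ (2 * d)" by (simp add: power_mult power2_eq_square)
    finally show False using a na \<open>d \<ge> 2\<close> by simp
  next
    case False
    then have dd: "d * d \<le> m" by simp
    show False
    proof (cases "d = 0")
      case True
      then have "(2::nat) ^ m \<le> 1" using a by simp
      moreover have "(2::nat) ^ m > 1" using one_less_power[of "2::nat" m] m by simp
      ultimately show False by simp
    next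
      case False
      then have d0: "d > 0" by simp
      define q where "q = m div d"
      have "d * d div d \<le> m div d" by (rule div_le_mono[OF dd])
      then have dq: "d \<le> q" unfolding q_def using d0 by simp
      have qd: "q * d \<le> m" unfolding q_def by (rule div_times_less_eq_dividend)
      have mq: "m < (q + 1) * d"
      proof -
        have "m = q * d + m mod d" unfolding q_def by simp
        moreover have "m mod d < d" using d0 by simp
        ultimately show ?thesis by (simp add: algebra_simps)
      qed
      have q5: "q \<ge> 5"
      proof (rule ccontr)
        assume "\<not> q \<ge> 5"
        then have "q + 1 \<le> 5" "d \<le> 4" using dq by auto
        then have "(q + 1) * d \<le> 5 * 4" by (intro mult_le_mono) auto
        then show False using mq m by simp
      qed
      have "m + 1 \<le> (q + 1) * d" using mq by simp
      also have "\<dots> \<le> (q + 1) * q" using dq by (rule mult_le_mono2)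
      also have "\<dots> < 2 ^ q" using qpow[OF q5] .
      finally have "m + 1 < 2 ^ q" .
      then have "(m + 1) ^ d < (2 ^ q) ^ d" using d0 by (intro power_strict_mono) auto
      also have "\<dots> = 2 ^ (q * d)" by (simp add: power_mult)
      also have "\<dots> \<le> 2 ^ m" using qd by (intro power_increasing) auto
      finally show False using a by simp
    qed
  qed
qed

lemma key:
  assumes LDd: "LD H = enat d" and om: "clique_number H m = enat (2 ^ m)"
  shows "(2::nat) ^ m \<le> (m + 1) ^ d"
proof -
  let ?A = "{enat (card C) | C. finite C \<and> is_clique H m C}"
  have SA: "Sup ?A = enat (2 ^ m)" using om unfolding clique_number_def .
  have ne: "?A \<noteq> {}"
  proof
    assume "?A = {}"
    then have "Sup ?A = 0" by (simp add: Sup_enat_def)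
    then show False using SA by (simp add: zero_enat_def)
  qed
  have fA: "finite ?A"
  proof (rule ccontr)
    assume "\<not> finite ?A"
    then have "Sup ?A = \<infinity>" using ne unfolding Sup_enat_def by auto
    then show False using SA by simp
  qed
  have "Sup ?A = (if ?A = {} then 0 else if finite ?A then Max ?A else \<infinity>)" by (fact Sup_enat_def)
  also have "\<dots> = Max ?A" by (rule trans[OF if_not_P[OF ne] if_P[OF fA]])
  finally have "Max ?A = enat (2 ^ m)" using SA by simp
  moreover have "Max ?A \<in> ?A" using fA ne by (rule Max_in)
  ultimately have "enat (2 ^ m) \<in> ?A" by simp
  then obtain C where fin: "finite C" and cl: "is_clique H m C" and cC: "card C = 2 ^ m"
    by auto
  have len: "\<forall>S\<in>C. length S = m \<and> realizable H S"
    using cl unfolding is_clique_def datasets_def by auto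
  have adj: "\<forall>S\<in>C. \<forall>S'\<in>C. S \<noteq> S' \<longrightarrow> adjacent S S'"
    using cl unfolding is_clique_def by auto
  have cov: "\<forall>f. \<exists>S\<in>C. \<forall>(x, y)\<in>set S. f x = y"
    using covering[OF fin len adj cC] by blast
  have "card {S\<in>C. set [] \<subseteq> set S} \<le> bnd m (Suc d)"
    by (rule rank[OF fin len adj cov sh_LD[OF LDd]])
  then have "card C \<le> bnd m (Suc d)" by simp
  also have "\<dots> \<le> (m + 1) ^ d" by (rule bnd_le)
  finally show ?thesis using cC by simp
qed

lemma rbound:
  assumes "(2::nat) ^ m \<le> (m + 1) ^ d"
  shows "real m \<le> max (if d = 0 then 0 else 2 * real d * log 2 (real d)) 300"
proof (cases "m \<le> 300")
  case True then show ?thesis by simp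
next
  case False
  then have d2: "2 \<le> d" and p: "2 ^ m \<le> d ^ (2 * d)" using arith[OF assms] by auto
  have "real m = log 2 (2 ^ m)" by simp
  also have "\<dots> \<le> log 2 (real d ^ (2 * d))"
  proof -
    have "real (2 ^ m) \<le> real (d ^ (2 * d))" using p by (simp only: of_nat_le_iff)
    then have "(2::real) ^ m \<le> real d ^ (2 * d)" by simp
    then show ?thesis using d2 by (subst log_le_cancel_iff) auto
  qed
  also have "\<dots> = 2 * real d * log 2 (real d)" using d2 by (simp add: log_nat_power)
  finally show ?thesis using d2 by simp
qed

theorem mainTheorem13:
  fixes H :: "('x \<Rightarrow> bool) set"
  shows "ereal_of_enat (CD H) \<le>
    (case LD H of
       \<infinity> \<Rightarrow> \<infinity>
     | enat d \<Rightarrow> ereal (max (if d = 0 then 0 else 2 * real d * log 2 (real d)) 300))"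
proof (cases "LD H")
  case infinity
  then show ?thesis by simp
next
  case (enat d)
  let ?B = "max (if d = 0 then 0 else 2 * real d * log 2 (real d)) (300::real)"
  let ?M = "{enat m | m. clique_number H m = enat (2 ^ m)}"
  have mb: "real m \<le> ?B" if "clique_number H m = enat (2 ^ m)" for m
    using rbound[OF key[OF enat that]] .
  have mN: "m \<le> max 300 (d ^ (2 * d))" if "clique_number H m = enat (2 ^ m)" for m
  proof -
    have "m < 2 ^ m" by simp
    have "m \<le> 300 \<or> 2 ^ m \<le> d ^ (2 * d)" using arith[OF key[OF enat that]] by auto
    then show ?thesis
    proof
      assume "2 ^ m \<le> d ^ (2 * d)"
      then have "m \<le> d ^ (2 * d)" using \<open>m < 2 ^ m\<close> by linarith
      then show ?thesis by simp
    qed simp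
  qed
  have "?M \<subseteq> enat ` {..max 300 (d ^ (2 * d))}" using mN by auto
  then have fM: "finite ?M" by (rule finite_subset) simp
  show ?thesis
  proof (cases "?M = {}")
    case True
    have "CD H = (if ?M = {} then 0 else if finite ?M then Max ?M else \<infinity>)"
      unfolding CD_def by (fact Sup_enat_def)
    also have "\<dots> = 0" by (rule if_P[OF True])
    finally have "CD H = 0" .
    then have e1: "ereal_of_enat (CD H) = ereal 0" by (simp add: zero_ereal_def)
    have "(0::real) \<le> ?B" by simp
    then have e2: "ereal 0 \<le> ereal ?B" by (simp only: ereal_less_eq)
    have e3: "(case LD H of \<infinity> \<Rightarrow> \<infinity> | enat d \<Rightarrow> ereal (max (if d = 0 then 0 else 2 * real d * log 2 (real d)) 300)) = ereal ?B"
      using enat by simp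
    show ?thesis unfolding e1 e3 by (rule e2)
  next
    case False
    have "CD H = (if ?M = {} then 0 else if finite ?M then Max ?M else \<infinity>)"
      unfolding CD_def by (fact Sup_enat_def)
    also have "\<dots> = Max ?M" by (rule trans[OF if_not_P[OF False] if_P[OF fM]])
    finally have "CD H = Max ?M" .
    moreover have "Max ?M \<in> ?M" using fM False by (rule Max_in)
    ultimately obtain m where "CD H = enat m" "clique_number H m = enat (2 ^ m)" by auto
    then have "ereal_of_enat (CD H) = ereal (real m)" "real m \<le> ?B" using mb by auto
    moreover have e3: "(case LD H of \<infinity> \<Rightarrow> \<infinity> | enat d \<Rightarrow> ereal (max (if d = 0 then 0 else 2 * real d * log 2 (real d)) 300)) = ereal ?B"
      using enat by simp
    ultimately show ?thesis by (simp only: ereal_less_eq)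
  qed
qed

end
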